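(* Let $S\subseteq\{0,1,\dots,\omega\}$ and $\alpha\in\{0,1,\dots,\omega\}\setminus S$. Every RC$_S$-model $(W,(R_\beta)_{\beta\in S},v)$ can be expanded, by adding a suitable relation $R_\alpha$ on $W$ (keeping $W$, the relations $R_\beta$ and the valuation $v$ unchanged), to an RC$_{S\cup\{\alpha\}}$-model.
   Context: A Kripke model for signature $S$: nonempty $W$, relations $(R_\beta)_{\beta\in S}$, valuation. An RC$_S$-frame satisfies, for all $\beta,\gamma\in S$: $R_\beta R_\gamma\subseteq R_{\min(\beta,\gamma)}$ (polytransitivity); if $\beta>\gamma$ then $xR_\beta y$ and $xR_\gamma z$ imply $yR_\gamma z$ (condition J); and $R_\beta\subseteq R_\gamma$ whenever $\gamma<\beta$ (monotonicity). An RC$_S$-model is a Kripke model on an RC$_S$-frame. *)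

theory Defs
  imports Main "HOL-Library.Extended_Nat"
begin

text \<open>Indices from {0,1,...,omega} are rendered as enat (infinity = omega).\<close>

definition kripke_model ::
  "enat set \<Rightarrow> 'w set \<Rightarrow> (enat \<Rightarrow> ('w \<times> 'w) set) \<Rightarrow> ('p \<Rightarrow> 'w set) \<Rightarrow> bool" where
  "kripke_model S W R v \<longleftrightarrow>
     W \<noteq> {} \<and> (\<forall>\<beta>\<in>S. R \<beta> \<subseteq> W \<times> W) \<and> (\<forall>p. v p \<subseteq> W)"

definition RC_frame :: "enat set \<Rightarrow> 'w set \<Rightarrow> (enat \<Rightarrow> ('w \<times> 'w) set) \<Rightarrow> bool" where
  "RC_frame S W R \<longleftrightarrow>
     W \<noteq> {} \<and> (\<forall>\<beta>\<in>S. R \<beta> \<subseteq> W \<times> W) \<and>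
     (\<forall>\<beta>\<in>S. \<forall>\<gamma>\<in>S. R \<beta> O R \<gamma> \<subseteq> R (min \<beta> \<gamma>)) \<and>
     (\<forall>\<beta>\<in>S. \<forall>\<gamma>\<in>S. \<beta> > \<gamma> \<longrightarrow>
        (\<forall>x y z. (x, y) \<in> R \<beta> \<longrightarrow> (x, z) \<in> R \<gamma> \<longrightarrow> (y, z) \<in> R \<gamma>)) \<and>
     (\<forall>\<beta>\<in>S. \<forall>\<gamma>\<in>S. \<gamma> < \<beta> \<longrightarrow> R \<beta> \<subseteq> R \<gamma>)"

definition RC_model ::
  "enat set \<Rightarrow> 'w set \<Rightarrow> (enat \<Rightarrow> ('w \<times> 'w) set) \<Rightarrow> ('p \<Rightarrow> 'w set) \<Rightarrow> bool" where
  "RC_model S W R v \<longleftrightarrow> kripke_model S W R v \<and> RC_frame S W R"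

end

theory Submission
  imports Defs
begin

lemma main_case:
  fixes S :: "enat set" and \<alpha> :: enat and W :: "'w set" and R :: "enat \<Rightarrow> ('w \<times> 'w) set"
  assumes aS: "\<alpha> \<notin> S" and F: "RC_frame S W R"
    and PW: "P \<subseteq> W \<times> W" and PP: "P O P \<subseteq> P"
    and up1: "\<And>\<beta>. \<beta> \<in> S \<Longrightarrow> \<beta> > \<alpha> \<Longrightarrow> R \<beta> \<subseteq> P"
    and up2: "\<And>\<beta>. \<beta> \<in> S \<Longrightarrow> \<beta> > \<alpha> \<Longrightarrow> P O R \<beta> \<subseteq> P"
    and lo1: "\<And>\<gamma>. \<gamma> \<in> S \<Longrightarrow> \<gamma> < \<alpha> \<Longrightarrow> P \<subseteq> R \<gamma>"
    and loJ: "\<And>\<gamma> x y z. \<gamma> \<in> S \<Longrightarrow> \<gamma> < \<alpha> \<Longrightarrow> (x,y) \<in> P \<Longrightarrow> (x,z) \<in> R \<gamma> \<Longrightarrow> (y,z) \<in> R \<gamma>"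
    and lo2: "\<And>\<gamma>. \<gamma> \<in> S \<Longrightarrow> \<gamma> < \<alpha> \<Longrightarrow> R \<gamma> O P \<subseteq> R \<gamma>"
  shows "\<exists>Q. Q \<subseteq> W \<times> W \<and> RC_frame (insert \<alpha> S) W (R(\<alpha> := Q))"
proof -
  define Q0 where "Q0 = P \<union> (P\<inverse> O P)"
  define Q where "Q = Q0\<^sup>+"
  have Fs: "W \<noteq> {}" "\<forall>\<beta>\<in>S. R \<beta> \<subseteq> W \<times> W"
    "\<forall>\<beta>\<in>S. \<forall>\<gamma>\<in>S. R \<beta> O R \<gamma> \<subseteq> R (min \<beta> \<gamma>)"
    "\<forall>\<beta>\<in>S. \<forall>\<gamma>\<in>S. \<beta> > \<gamma> \<longrightarrow> (\<forall>x y z. (x, y) \<in> R \<beta> \<longrightarrow> (x, z) \<in> R \<gamma> \<longrightarrow> (y, z) \<in> R \<gamma>)"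
    "\<forall>\<beta>\<in>S. \<forall>\<gamma>\<in>S. \<gamma> < \<beta> \<longrightarrow> R \<beta> \<subseteq> R \<gamma>"
    using F unfolding RC_frame_def by auto
  have RgT: "R \<gamma> O R \<gamma> \<subseteq> R \<gamma>" if "\<gamma> \<in> S" for \<gamma> using Fs(3) that by fastforce
  have Q0W: "Q0 \<subseteq> W \<times> W" using PW unfolding Q0_def by auto
  have QW: "Q \<subseteq> W \<times> W" unfolding Q_def using Q0W
    by (metis trancl_subset_Sigma)
  have PQ: "P \<subseteq> Q" unfolding Q_def Q0_def by auto
  have QQ: "Q O Q \<subseteq> Q" unfolding Q_def by auto
  have Q0lo: "Q0 \<subseteq> R \<gamma>" if g: "\<gamma> \<in> S" "\<gamma> < \<alpha>" for \<gamma>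
  proof
    fix p assume "p \<in> Q0"
    then obtain y z where p: "p = (y,z)" and "(y,z) \<in> P \<or> (\<exists>u. (u,y) \<in> P \<and> (u,z) \<in> P)"
      unfolding Q0_def by (cases p) auto
    then show "p \<in> R \<gamma>" using lo1[OF g] loJ[OF g] by blast
  qed
  have Qlo0: "(a,b) \<in> R \<gamma>" if g: "\<gamma> \<in> S" "\<gamma> < \<alpha>" and ab: "(a,b) \<in> Q" for \<gamma> a b
    using ab unfolding Q_def
  proof (induction rule: trancl_induct)
    case (base y) then show ?case using Q0lo[OF g] by auto
  next
    case (step y z) then show ?case using Q0lo[OF g] RgT[OF g(1)] by blast
  qed
  have Qlo: "Q \<subseteq> R \<gamma>" if g: "\<gamma> \<in> S" "\<gamma> < \<alpha>" for \<gamma>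
    using Qlo0[OF g] by auto
  have Q0J: "(y,z) \<in> R \<gamma>" if g: "\<gamma> \<in> S" "\<gamma> < \<alpha>" and xy: "(x,y) \<in> Q0" and xz: "(x,z) \<in> R \<gamma>" for \<gamma> x y z
  proof -
    from xy consider "(x,y) \<in> P" | u where "(u,x) \<in> P" "(u,y) \<in> P" unfolding Q0_def by auto
    then show ?thesis
    proof cases
      case 1 then show ?thesis using loJ[OF g] xz by blast
    next
      case 2
      have "(u,z) \<in> R \<gamma>" using 2(1) xz lo1[OF g] RgT[OF g(1)] by blast
      then show ?thesis using loJ[OF g 2(2)] by blast
    qed
  qed
  have QJ: "(x,y) \<in> Q \<Longrightarrow> (\<forall>z. (x,z) \<in> R \<gamma> \<longrightarrow> (y,z) \<in> R \<gamma>)" if g: "\<gamma> \<in> S" "\<gamma> < \<alpha>" for \<gamma> x y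
    unfolding Q_def
  proof (induction rule: trancl_induct)
    case (base y) then show ?case using Q0J[OF g] by blast
  next
    case (step y z) then show ?case using Q0J[OF g] by blast
  qed
  have upQ: "R \<beta> \<subseteq> Q" if "\<beta> \<in> S" "\<beta> > \<alpha>" for \<beta> using up1[OF that] PQ by blast
  have Q0up: "(y,z) \<in> Q0" if b: "\<beta> \<in> S" "\<beta> > \<alpha>" and xy: "(x,y) \<in> R \<beta>" and xz: "(x,z) \<in> Q0" for \<beta> x y z
  proof -
    from xz consider "(x,z) \<in> P" | u where "(u,x) \<in> P" "(u,z) \<in> P" unfolding Q0_def by auto
    then show ?thesis
    proof cases
      case 1
      have "(x,y) \<in> P" using xy up1[OF b] by blast
      then show ?thesis using 1 unfolding Q0_def by blast
    next
      case 2
      have "(u,y) \<in> P" using 2(1) xy up2[OF b] by blast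
      then show ?thesis using 2(2) unfolding Q0_def by blast
    qed
  qed
  have QupJ: "(x,z) \<in> Q \<Longrightarrow> (\<forall>y. (x,y) \<in> R \<beta> \<longrightarrow> (y,z) \<in> Q)" if b: "\<beta> \<in> S" "\<beta> > \<alpha>" for \<beta> x z
    unfolding Q_def
  proof (induction rule: trancl_induct)
    case (base y) then show ?case using Q0up[OF b] by blast
  next
    case (step y z)
    then show ?case by (meson trancl.trancl_into_trancl)
  qed
  let ?R = "R(\<alpha> := Q)"
  have "RC_frame (insert \<alpha> S) W ?R"
    unfolding RC_frame_def
  proof (intro conjI ballI impI allI)
    show "W \<noteq> {}" by (rule Fs(1))
  next
    fix \<beta> assume "\<beta> \<in> insert \<alpha> S" then show "?R \<beta> \<subseteq> W \<times> W"
      using QW Fs(2) aS by auto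
  next
    fix \<beta> \<gamma> assume b: "\<beta> \<in> insert \<alpha> S" and g: "\<gamma> \<in> insert \<alpha> S"
    show "?R \<beta> O ?R \<gamma> \<subseteq> ?R (min \<beta> \<gamma>)"
    proof (cases "\<beta> = \<alpha>")
      case True
      show ?thesis
      proof (cases "\<gamma> = \<alpha>")
        case True with \<open>\<beta> = \<alpha>\<close> show ?thesis using QQ by simp
      next
        case False
        then have gS: "\<gamma> \<in> S" using g by auto
        show ?thesis
        proof (cases "\<gamma> < \<alpha>")
          case True
          then show ?thesis using \<open>\<beta> = \<alpha>\<close> Qlo[OF gS True] RgT[OF gS] False
            by (auto simp: min_def)
        next
          case nl: False
          then have "\<gamma> > \<alpha>" using False by auto
          then show ?thesis using \<open>\<beta> = \<alpha>\<close> upQ[OF gS] QQ False by (auto simp: min_def)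
        qed
      qed
    next
      case False
      then have bS: "\<beta> \<in> S" using b by auto
      show ?thesis
      proof (cases "\<gamma> = \<alpha>")
        case True
        show ?thesis
        proof (cases "\<beta> < \<alpha>")
          case lt: True
          then show ?thesis using True False Qlo[OF bS lt] RgT[OF bS] by (auto simp: min_def)
        next
          case nl: False
          then have "\<beta> > \<alpha>" using False by auto
          then show ?thesis using True False upQ[OF bS] QQ by (auto simp: min_def)
        qed
      next
        case gn: False
        then have gS: "\<gamma> \<in> S" using g by auto
        have "min \<beta> \<gamma> \<noteq> \<alpha>" using False gn by (auto simp: min_def)
        then show ?thesis using Fs(3) bS gS False gn by auto
      qed
    qed
  next
    fix \<beta> \<gamma> x y z assume b: "\<beta> \<in> insert \<alpha> S" and g: "\<gamma> \<in> insert \<alpha> S" and lt: "\<beta> > \<gamma>"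
      and xy: "(x,y) \<in> ?R \<beta>" and xz: "(x,z) \<in> ?R \<gamma>"
    show "(y,z) \<in> ?R \<gamma>"
    proof (cases "\<beta> = \<alpha>")
      case True
      then have gn: "\<gamma> \<noteq> \<alpha>" and gS: "\<gamma> \<in> S" using lt g by auto
      then show ?thesis using QJ[OF gS] lt True xy xz by auto
    next
      case False
      then have bS: "\<beta> \<in> S" using b by auto
      show ?thesis
      proof (cases "\<gamma> = \<alpha>")
        case True
        then show ?thesis using QupJ[OF bS] lt False xy xz by auto
      next
        case gn: False
        then have gS: "\<gamma> \<in> S" using g by auto
        then show ?thesis using Fs(4) bS lt xy xz False gn by auto
      qed
    qed
  next
    fix \<beta> \<gamma> assume b: "\<beta> \<in> insert \<alpha> S" and g: "\<gamma> \<in> insert \<alpha> S" and lt: "\<gamma> < \<beta>"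
    show "?R \<beta> \<subseteq> ?R \<gamma>"
    proof (cases "\<beta> = \<alpha>")
      case True
      then have gn: "\<gamma> \<noteq> \<alpha>" and gS: "\<gamma> \<in> S" using lt g by auto
      then show ?thesis using Qlo[OF gS] lt True by auto
    next
      case False
      then have bS: "\<beta> \<in> S" using b by auto
      show ?thesis
      proof (cases "\<gamma> = \<alpha>")
        case True
        then show ?thesis using upQ[OF bS] lt False by auto
      next
        case gn: False
        then have gS: "\<gamma> \<in> S" using g by auto
        then show ?thesis using Fs(5) bS lt False gn by auto
      qed
    qed
  qed
  then show ?thesis using QW by blast
qed

theorem lemma4p4:
  fixes S :: "enat set" and \<alpha> :: enat
    and W :: "'w set" and R :: "enat \<Rightarrow> ('w \<times> 'w) set" and v :: "'p \<Rightarrow> 'w set"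
  assumes "\<alpha> \<notin> S"
    and "RC_model S W R v"
  shows "\<exists>Q. Q \<subseteq> W \<times> W \<and> RC_model (insert \<alpha> S) W (R(\<alpha> := Q)) v"
proof -
  have F: "RC_frame S W R" and K: "kripke_model S W R v" using assms(2) unfolding RC_model_def by auto
  have Fs: "W \<noteq> {}" "\<forall>\<beta>\<in>S. R \<beta> \<subseteq> W \<times> W"
    "\<forall>\<beta>\<in>S. \<forall>\<gamma>\<in>S. R \<beta> O R \<gamma> \<subseteq> R (min \<beta> \<gamma>)"
    "\<forall>\<beta>\<in>S. \<forall>\<gamma>\<in>S. \<beta> > \<gamma> \<longrightarrow> (\<forall>x y z. (x, y) \<in> R \<beta> \<longrightarrow> (x, z) \<in> R \<gamma> \<longrightarrow> (y, z) \<in> R \<gamma>)"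
    "\<forall>\<beta>\<in>S. \<forall>\<gamma>\<in>S. \<gamma> < \<beta> \<longrightarrow> R \<beta> \<subseteq> R \<gamma>"
    using F unfolding RC_frame_def by auto
  obtain P where P: "P \<subseteq> W \<times> W" "P O P \<subseteq> P"
    "\<And>\<beta>. \<beta> \<in> S \<Longrightarrow> \<beta> > \<alpha> \<Longrightarrow> R \<beta> \<subseteq> P"
    "\<And>\<beta>. \<beta> \<in> S \<Longrightarrow> \<beta> > \<alpha> \<Longrightarrow> P O R \<beta> \<subseteq> P"
    "\<And>\<gamma>. \<gamma> \<in> S \<Longrightarrow> \<gamma> < \<alpha> \<Longrightarrow> P \<subseteq> R \<gamma>"
    "\<And>\<gamma> x y z. \<gamma> \<in> S \<Longrightarrow> \<gamma> < \<alpha> \<Longrightarrow> (x,y) \<in> P \<Longrightarrow> (x,z) \<in> R \<gamma> \<Longrightarrow> (y,z) \<in> R \<gamma>"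
    "\<And>\<gamma>. \<gamma> \<in> S \<Longrightarrow> \<gamma> < \<alpha> \<Longrightarrow> R \<gamma> O P \<subseteq> R \<gamma>"
  proof (cases "\<exists>\<beta>\<in>S. \<beta> > \<alpha>")
    case False
    show ?thesis
    proof (rule that[of "{}"])
      fix \<beta> assume "\<beta> \<in> S" "\<beta> > \<alpha>"
      then show "R \<beta> \<subseteq> {}" using False by blast
    qed auto
  next
    case True
    define b where "b = (LEAST \<beta>. \<beta> \<in> S \<and> \<beta> > \<alpha>)"
    have bS: "b \<in> S" "b > \<alpha>" using True unfolding b_def by (metis (mono_tags, lifting) LeastI)+
    have bl: "b \<le> \<beta>" if "\<beta> \<in> S" "\<beta> > \<alpha>" for \<beta> unfolding b_def by (rule Least_le) (use that in auto)
    show ?thesis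
    proof (rule that[of "R b"])
      show "R b \<subseteq> W \<times> W" using Fs(2) bS by auto
      show "R b O R b \<subseteq> R b" using bspec[OF bspec[OF Fs(3) bS(1)] bS(1)] by simp
    next
      fix \<beta> assume "\<beta> \<in> S" "\<beta> > \<alpha>"
      then show "R \<beta> \<subseteq> R b" using bl[of \<beta>] bspec[OF bspec[OF Fs(5) \<open>\<beta> \<in> S\<close>] bS(1)] by (cases "\<beta> = b") auto
    next
      fix \<beta> assume "\<beta> \<in> S" "\<beta> > \<alpha>"
      then have "min b \<beta> = b" using bl[of \<beta>] by (simp add: min_def)
      then show "R b O R \<beta> \<subseteq> R b" using bspec[OF bspec[OF Fs(3) bS(1)] \<open>\<beta> \<in> S\<close>] by simp
    next
      fix \<gamma> assume "\<gamma> \<in> S" "\<gamma> < \<alpha>"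
      have "\<gamma> < b" using \<open>\<gamma> < \<alpha>\<close> bS(2) by (rule less_trans)
      then show "R b \<subseteq> R \<gamma>" using bspec[OF bspec[OF Fs(5) bS(1)] \<open>\<gamma> \<in> S\<close>] by simp
    next
      fix \<gamma> x y z assume "\<gamma> \<in> S" "\<gamma> < \<alpha>" "(x,y) \<in> R b" "(x,z) \<in> R \<gamma>"
      have "\<gamma> < b" using \<open>\<gamma> < \<alpha>\<close> bS(2) by (rule less_trans)
      then show "(y,z) \<in> R \<gamma>" using bspec[OF bspec[OF Fs(4) bS(1)] \<open>\<gamma> \<in> S\<close>] \<open>(x,y) \<in> R b\<close> \<open>(x,z) \<in> R \<gamma>\<close> by blast
    next
      fix \<gamma> assume "\<gamma> \<in> S" "\<gamma> < \<alpha>"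
      have "\<gamma> < b" using \<open>\<gamma> < \<alpha>\<close> bS(2) by (rule less_trans)
      then have "min \<gamma> b = \<gamma>" by (simp add: min_def less_imp_le)
      then show "R \<gamma> O R b \<subseteq> R \<gamma>" using bspec[OF bspec[OF Fs(3) \<open>\<gamma> \<in> S\<close>] bS(1)] by simp
    qed
  qed
  have "\<exists>Q. Q \<subseteq> W \<times> W \<and> RC_frame (insert \<alpha> S) W (R(\<alpha> := Q))"
    by (rule main_case[OF assms(1) F, of P]) (fact P)+
  then obtain Q where "Q \<subseteq> W \<times> W" "RC_frame (insert \<alpha> S) W (R(\<alpha> := Q))"
    by (elim exE conjE)
  moreover have "kripke_model (insert \<alpha> S) W (R(\<alpha> := Q)) v"
    using K \<open>Q \<subseteq> W \<times> W\<close> assms(1) unfolding kripke_model_def by auto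
  ultimately show ?thesis unfolding RC_model_def by blast
qed

end
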